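(* Let $m=m(n)=O(n\log\log n)$ and let $G\sim G(n,m)$. Then, for all sufficiently large $n$, $$\Pr\big(\delta(G)\geq 2\big)\leq n\,e^{-2m e^{-2m/n}}.$$
   Context: $G(n,m)$ is the uniform random graph model: $G$ is chosen uniformly at random among all graphs on vertex set $[n]$ with exactly $m$ edges. $\delta(G)$ denotes the minimum degree of $G$. *)

theory Defs
  imports "HOL-Probability.Probability" "HOL-Library.Landau_Symbols"
begin

text \<open>Simple graphs on vertex set [n] = {0..<n}, represented by their edge sets
  (sets of 2-element subsets of {0..<n}).\<close>

definition all_edges :: "nat \<Rightarrow> nat set set" where
  "all_edges n = {e. \<exists>u v. u < n \<and> v < n \<and> u \<noteq> v \<and> e = {u, v}}"

definition Gnm_space :: "nat \<Rightarrow> nat \<Rightarrow> nat set set set" where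
  "Gnm_space n m = {E. E \<subseteq> all_edges n \<and> card E = m}"

definition Gnm :: "nat \<Rightarrow> nat \<Rightarrow> nat set set pmf" where
  "Gnm n m = pmf_of_set (Gnm_space n m)"

definition degree :: "nat set set \<Rightarrow> nat \<Rightarrow> nat" where
  "degree E v = card {e \<in> E. v \<in> e}"

definition min_degree :: "nat \<Rightarrow> nat set set \<Rightarrow> nat" where
  "min_degree n E = Min (degree E ` {..<n})"

end

theory Submission imports Defs "HOL-Combinatorics.Permutations" "HOL-Real_Asymp.Real_Asymp" begin

lemma exp_partial:
  fixes l :: real assumes "0 \<le> l"
  shows "(\<Sum>k<K. l^k / fact k) \<le> exp l"
proof -
  have s: "summable (\<lambda>k. l^k /\<^sub>R fact k)" by (rule summable_exp_generic)
  have "(\<Sum>k<K. l^k /\<^sub>R fact k) \<le> (\<Sum>k. l^k /\<^sub>R fact k)"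
    by (rule sum_le_suminf[OF s]) (use assms in auto)
  thus ?thesis by (simp add: exp_def divide_inverse mult.commute)
qed

lemma exp_partial2:
  fixes l :: real assumes "0 \<le> l"
  shows "(\<Sum>k\<in>{2..K}. l^k / fact k) \<le> exp l - 1 - l"
proof -
  have "(\<Sum>k<K+3. l^k / fact k) = (\<Sum>k<2. l^k / fact k) + (\<Sum>k\<in>{2..<K+3}. l^k / fact k)"
    unfolding lessThan_atLeast0 by (rule sum.atLeastLessThan_concat[symmetric]) auto
  moreover have "(\<Sum>k<2. l^k / fact k) = 1 + l" by (simp add: numeral_2_eq_2)
  moreover have "(\<Sum>k\<in>{2..K}. l^k / fact k) \<le> (\<Sum>k\<in>{2..<K+3}. l^k / fact k)"
    by (rule sum_mono2) (use assms in auto)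
  ultimately show ?thesis using exp_partial[OF assms, of "K+3"] by linarith
qed


definition GS :: "nat \<Rightarrow> 'a set \<Rightarrow> ('a \<Rightarrow> nat) set" where
  "GS n D = {s \<in> D \<rightarrow>\<^sub>E {..<n}. \<forall>v<n. 2 \<le> card {x\<in>D. s x = v}}"

lemma GS_finite: "finite D \<Longrightarrow> finite (GS n D)"
  unfolding GS_def by (rule finite_subset[of _ "D \<rightarrow>\<^sub>E {..<n}"]) (auto intro: finite_PiE)

lemma GS_step:
  assumes D: "finite D"
  shows "card (GS (Suc n) D) \<le> (\<Sum>A\<in>{A. A \<subseteq> D \<and> 2 \<le> card A}. card (GS n (D - A)))"
proof -
  define S where "S = {A. A \<subseteq> D \<and> 2 \<le> card A}"
  define ext where "ext = (\<lambda>A (t::'a \<Rightarrow> nat) x. if x \<in> A then n else t x)"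
  have finS: "finite S" unfolding S_def using D by auto
  have sub: "GS (Suc n) D \<subseteq> (\<Union>A\<in>S. ext A ` GS n (D - A))"
  proof
    fix s assume s: "s \<in> GS (Suc n) D"
    define A where "A = {x\<in>D. s x = n}"
    define t where "t = restrict s (D - A)"
    have sD: "s \<in> D \<rightarrow>\<^sub>E {..<Suc n}" and cnt: "\<And>v. v < Suc n \<Longrightarrow> 2 \<le> card {x\<in>D. s x = v}"
      using s unfolding GS_def by auto
    have AS: "A \<in> S" unfolding S_def A_def using cnt[of n] by auto
    have "t \<in> GS n (D - A)"
    proof -
      have "t \<in> (D - A) \<rightarrow>\<^sub>E {..<n}"
        using sD unfolding t_def A_def by (auto simp: PiE_def Pi_def less_Suc_eq)
      moreover have "2 \<le> card {x\<in>D - A. t x = v}" if "v < n" for v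
      proof -
        have "{x\<in>D - A. t x = v} = {x\<in>D. s x = v}" using that unfolding t_def A_def by auto
        thus ?thesis using cnt[of v] that by simp
      qed
      ultimately show ?thesis unfolding GS_def by auto
    qed
    moreover have "s = ext A t"
    proof
      fix x show "s x = ext A t x"
        using sD unfolding ext_def t_def A_def by (cases "x \<in> D") (auto simp: PiE_def extensional_def)
    qed
    ultimately show "s \<in> (\<Union>A\<in>S. ext A ` GS n (D - A))" using AS by blast
  qed
  have "card (GS (Suc n) D) \<le> card (\<Union>A\<in>S. ext A ` GS n (D - A))"
    by (rule card_mono) (use finS D GS_finite[of "D - _"] sub in auto)
  also have "\<dots> \<le> (\<Sum>A\<in>S. card (ext A ` GS n (D - A)))" by (rule card_UN_le[OF finS])
  also have "\<dots> \<le> (\<Sum>A\<in>S. card (GS n (D - A)))"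
    by (rule sum_mono, rule card_image_le) (use D GS_finite[of "D - _"] in auto)
  finally show ?thesis unfolding S_def .
qed

lemma sum_subsets_bound:
  fixes l :: real
  assumes D: "finite D" and l: "0 \<le> l"
  shows "(\<Sum>A\<in>{A. A \<subseteq> D \<and> 2 \<le> card A}. fact (card D - card A) * l ^ card A)
         \<le> fact (card D) * (exp l - 1 - l)"
proof -
  define S where "S = {A. A \<subseteq> D \<and> 2 \<le> card A}"
  have finS: "finite S" unfolding S_def using D by auto
  have cS: "card ` S \<subseteq> {2..card D}" unfolding S_def using D by (auto intro: card_mono)
  have "(\<Sum>A\<in>S. fact (card D - card A) * l ^ card A)
      = (\<Sum>k\<in>{2..card D}. (\<Sum>A\<in>{A\<in>S. card A = k}. fact (card D - card A) * l ^ card A))"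
    by (rule sum.group[symmetric, OF finS _ cS]) simp
  also have "\<dots> = (\<Sum>k\<in>{2..card D}. fact (card D) * (l ^ k / fact k))"
  proof (rule sum.cong[OF refl])
    fix k assume k: "k \<in> {2..card D}"
    have e: "{A\<in>S. card A = k} = {A. A \<subseteq> D \<and> card A = k}" unfolding S_def using k by auto
    have "(\<Sum>A\<in>{A\<in>S. card A = k}. fact (card D - card A) * l ^ card A)
        = (\<Sum>A\<in>{A\<in>S. card A = k}. fact (card D - k) * l ^ k)" by (rule sum.cong) auto
    also have "\<dots> = real (card D choose k) * (fact (card D - k) * l ^ k)"
      using e n_subsets[OF D, of k] by simp
    also have "\<dots> = fact (card D) * (l ^ k / fact k)"
      using k by (simp add: binomial_fact field_simps)
    finally show "(\<Sum>A\<in>{A\<in>S. card A = k}. fact (card D - card A) * l ^ card A) = fact (card D) * (l ^ k / fact k)" .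
  qed
  also have "\<dots> = fact (card D) * (\<Sum>k\<in>{2..card D}. l ^ k / fact k)"
    by (simp add: sum_distrib_left)
  also have "\<dots> \<le> fact (card D) * (exp l - 1 - l)"
    by (rule mult_left_mono[OF exp_partial2[OF l]]) simp
  finally show ?thesis unfolding S_def .
qed

lemma GS_bound:
  fixes l :: real
  assumes "finite D" and l: "0 < l"
  shows "real (card (GS n D)) * l ^ card D \<le> fact (card D) * (exp l - 1 - l) ^ n"
  using assms(1)
proof (induction n arbitrary: D)
  case 0
  have "GS 0 D \<subseteq> D \<rightarrow>\<^sub>E {}" unfolding GS_def by auto
  hence "card (GS 0 D) \<le> card (D \<rightarrow>\<^sub>E ({}::nat set))"
    by (intro card_mono) (use 0 in \<open>auto intro: finite_PiE\<close>)
  also have "\<dots> = 0 ^ card D" using 0 by (simp add: card_PiE)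
  finally have c: "card (GS 0 D) \<le> 0 ^ card D" .
  show ?case
  proof (cases "card D = 0")
    case True thus ?thesis using c by simp
  next
    case False
    hence "card (GS 0 D) = 0" using c by (simp add: power_0_left)
    thus ?thesis by simp
  qed
next
  case (Suc n)
  define F where "F = exp l - 1 - l"
  have F0: "0 \<le> F" unfolding F_def using exp_ge_add_one_self[of l] by linarith
  define S where "S = {A. A \<subseteq> D \<and> 2 \<le> card A}"
  have finS: "finite S" unfolding S_def using Suc.prems by auto
  have "real (card (GS (Suc n) D)) * l ^ card D \<le> (\<Sum>A\<in>S. real (card (GS n (D - A)))) * l ^ card D"
    using GS_step[OF Suc.prems, of n] l unfolding S_def
    by (intro mult_right_mono) (simp_all flip: of_nat_sum)
  also have "\<dots> = (\<Sum>A\<in>S. (real (card (GS n (D - A))) * l ^ card (D - A)) * l ^ card A)"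
    unfolding sum_distrib_right
  proof (rule sum.cong[OF refl])
    fix A assume "A \<in> S"
    hence A: "A \<subseteq> D" unfolding S_def by auto
    hence "card D = card (D - A) + card A" using Suc.prems
      by (metis card_Diff_subset card_mono finite_subset le_add_diff_inverse2)
    thus "real (card (GS n (D - A))) * l ^ card D = real (card (GS n (D - A))) * l ^ card (D - A) * l ^ card A"
      by (simp add: power_add)
  qed
  also have "\<dots> \<le> (\<Sum>A\<in>S. (fact (card (D - A)) * F ^ n) * l ^ card A)"
    by (rule sum_mono, rule mult_right_mono) (use Suc.IH Suc.prems l in \<open>auto simp: F_def\<close>)
  also have "\<dots> = F ^ n * (\<Sum>A\<in>S. fact (card D - card A) * l ^ card A)"
    unfolding sum_distrib_left
  proof (rule sum.cong[OF refl])
    fix A assume "A \<in> S"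
    hence A: "A \<subseteq> D" unfolding S_def by auto
    hence "card (D - A) = card D - card A" using Suc.prems by (meson card_Diff_subset finite_subset)
    thus "fact (card (D - A)) * F ^ n * l ^ card A = F ^ n * (fact (card D - card A) * l ^ card A)" by simp
  qed
  also have "\<dots> \<le> F ^ n * (fact (card D) * F)"
    by (rule mult_left_mono) (use sum_subsets_bound[OF Suc.prems, of l] l F0 in \<open>auto simp: S_def F_def\<close>)
  also have "\<dots> = fact (card D) * F ^ Suc n" by simp
  finally show ?case unfolding F_def .
qed


lemma edge_facts:
  assumes "e \<in> all_edges n"
  shows "Min e \<in> e" "Max e \<in> e" "Min e \<noteq> Max e" "e = {Min e, Max e}" "e \<subseteq> {..<n}"
proof -
  obtain u v where uv: "u < n" "v < n" "u \<noteq> v" "e = {u, v}" using assms unfolding all_edges_def by auto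
  show "Min e \<in> e" "Max e \<in> e" "Min e \<noteq> Max e" "e = {Min e, Max e}" "e \<subseteq> {..<n}"
    using uv by (auto simp: min_def max_def)
qed

lemma all_edges_finite: "finite (all_edges n)"
  by (rule finite_subset[of _ "Pow {..<n}"]) (auto simp: all_edges_def)

lemma space_facts:
  assumes "E \<in> Gnm_space n m"
  shows "finite E" "card E = m" "E \<subseteq> all_edges n" "bij_betw (from_nat_into E) {..<m} E"
proof -
  show fE: "finite E" "card E = m" "E \<subseteq> all_edges n"
    using assms all_edges_finite[of n] finite_subset unfolding Gnm_space_def by auto
  show "bij_betw (from_nat_into E) {..<m} E" using bij_betw_from_nat_into_finite[OF fE(1)] fE(2) by simp
qed

definition Good :: "nat \<Rightarrow> nat \<Rightarrow> nat set set set" where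
  "Good n m = {E \<in> Gnm_space n m. \<forall>v<n. 2 \<le> degree E v}"

definition Psi :: "nat \<Rightarrow> nat set set \<times> (nat \<Rightarrow> nat) \<times> (nat \<Rightarrow> bool) \<Rightarrow> nat \<times> bool \<Rightarrow> nat" where
  "Psi m = (\<lambda>(E, p, ob) x. if x \<in> {..<m} \<times> UNIV then
      (if snd x = ob (fst x) then Min (from_nat_into E (p (fst x))) else Max (from_nat_into E (p (fst x))))
      else undefined)"

lemma Good_to_GS:
  "card (Good n m) * (fact m * 2 ^ m) \<le> card (GS n ({..<m} \<times> (UNIV :: bool set)))"
proof -
  define D where "D = {..<m} \<times> (UNIV :: bool set)"
  define P where "P = {p. p permutes {..<m}}"
  define Ob where "Ob = ({..<m} \<rightarrow>\<^sub>E (UNIV :: bool set))"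
  define X where "X = Good n m \<times> (P \<times> Ob)"
  have finGood: "finite (Good n m)"
    by (rule finite_subset[of _ "Pow (all_edges n)"]) (auto simp: Good_def Gnm_space_def all_edges_finite)
  have cX: "card X = card (Good n m) * (fact m * 2 ^ m)"
    unfolding X_def P_def Ob_def
    by (simp add: card_cartesian_product card_permutations card_PiE)
  have sig: "bij_betw (from_nat_into E \<circ> p) {..<m} E" if "E \<in> Good n m" "p \<in> P" for E p
    by (rule bij_betw_trans[OF permutes_imp_bij]) (use that space_facts in \<open>auto simp: P_def Good_def\<close>)
  have edge: "from_nat_into E (p i) \<in> all_edges n" if "E \<in> Good n m" "p \<in> P" "i < m" for E p i
    using bij_betw_apply[OF sig[OF that(1,2)]] that space_facts(3)[of E n m] by (auto simp: Good_def)
  have inj: "inj_on (Psi m) X"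
  proof (rule inj_onI)
    fix a b assume a: "a \<in> X" and b: "b \<in> X" and eq: "Psi m a = Psi m b"
    obtain E p ob where a': "a = (E, p, ob)" by (cases a) auto
    obtain E' p' ob' where b': "b = (E', p', ob')" by (cases b) auto
    have E: "E \<in> Good n m" "p \<in> P" "ob \<in> Ob" using a a' X_def by auto
    have E': "E' \<in> Good n m" "p' \<in> P" "ob' \<in> Ob" using b b' X_def by auto
    have sEq: "from_nat_into E (p i) = from_nat_into E' (p' i)" if i: "i < m" for i
    proof -
      have 1: "Psi m a (i, True) = Psi m b (i, True)" "Psi m a (i, False) = Psi m b (i, False)" using eq by auto
      have "{Psi m a (i, True), Psi m a (i, False)} = {Min (from_nat_into E (p i)), Max (from_nat_into E (p i))}"
        using i unfolding a' Psi_def by auto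
      also have "\<dots> = from_nat_into E (p i)" using edge_facts(4)[OF edge[OF E(1,2) i]] by simp
      finally have 2: "{Psi m a (i, True), Psi m a (i, False)} = from_nat_into E (p i)" .
      have "{Psi m b (i, True), Psi m b (i, False)} = {Min (from_nat_into E' (p' i)), Max (from_nat_into E' (p' i))}"
        using i unfolding b' Psi_def by auto
      also have "\<dots> = from_nat_into E' (p' i)" using edge_facts(4)[OF edge[OF E'(1,2) i]] by simp
      finally show ?thesis using 1 2 by simp
    qed
    have EE: "E = E'"
    proof -
      have "E = (from_nat_into E \<circ> p) ` {..<m}" using bij_betw_imp_surj_on[OF sig[OF E(1,2)]] by simp
      also have "\<dots> = (from_nat_into E' \<circ> p') ` {..<m}" using sEq by (auto simp: image_def)
      also have "\<dots> = E'" using bij_betw_imp_surj_on[OF sig[OF E'(1,2)]] by simp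
      finally show ?thesis .
    qed
    have pp: "p = p'"
    proof
      fix i show "p i = p' i"
      proof (cases "i < m")
        case True
        have "inj_on (from_nat_into E) {..<m}"
          using space_facts(4) E(1) unfolding Good_def by (auto dest: bij_betw_imp_inj_on)
        moreover have "p i \<in> {..<m}" "p' i \<in> {..<m}"
          using E(2) E'(2) True unfolding P_def by (auto dest: permutes_in_image)
        ultimately show ?thesis using sEq[OF True] EE by (auto dest: inj_onD)
      next
        case False thus ?thesis using E(2) E'(2) unfolding P_def by (simp add: permutes_not_in)
      qed
    qed
    have oo: "ob = ob'"
    proof
      fix i show "ob i = ob' i"
      proof (cases "i < m")
        case True
        have ed: "Min (from_nat_into E (p i)) \<noteq> Max (from_nat_into E (p i))"
          using edge_facts(3)[OF edge[OF E(1,2) True]] .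
        have 1: "Psi m a (i, ob i) = Min (from_nat_into E (p i))" using True by (simp add: a' Psi_def)
        have 2: "Psi m b (i, ob i) = (if ob i = ob' i then Min (from_nat_into E' (p' i)) else Max (from_nat_into E' (p' i)))"
          using True by (simp add: b' Psi_def)
        have "Psi m a (i, ob i) = Psi m b (i, ob i)" using eq by simp
        show ?thesis
        proof (rule ccontr)
          assume ne: "ob i \<noteq> ob' i"
          have "Psi m b (i, ob i) = Max (from_nat_into E (p i))" using 2 ne EE pp by simp
          thus False using 1 ed \<open>Psi m a (i, ob i) = Psi m b (i, ob i)\<close> by simp
        qed
      next
        case False thus ?thesis using E(3) E'(3) unfolding Ob_def by (auto simp: PiE_def extensional_def)
      qed
    qed
    show "a = b" using EE pp oo a' b' by simp
  qed
  have img: "Psi m ` X \<subseteq> GS n D"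
  proof
    fix y assume "y \<in> Psi m ` X"
    then obtain E p ob where x: "(E, p, ob) \<in> X" and y: "y = Psi m (E, p, ob)" by auto
    have E: "E \<in> Good n m" "p \<in> P" "ob \<in> Ob" using x X_def by auto
    define \<sigma> where "\<sigma> = from_nat_into E \<circ> p"
    have sg: "bij_betw \<sigma> {..<m} E" unfolding \<sigma>_def using sig[OF E(1,2)] .
    have ed: "\<sigma> i \<in> all_edges n" if "i < m" for i using edge[OF E(1,2) that] by (simp add: \<sigma>_def)
    have yv: "y (i, b) = (if b = ob i then Min (\<sigma> i) else Max (\<sigma> i))" if "i < m" for i b
      using that unfolding y Psi_def \<sigma>_def by simp
    have "y \<in> D \<rightarrow>\<^sub>E {..<n}"
    proof -
      have "y x \<in> {..<n}" if xD: "x \<in> D" for x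
      proof -
        obtain i b where x: "x = (i, b)" "i < m" using xD D_def by (cases x) auto
        show ?thesis using yv[OF x(2), of b] edge_facts(1,2,5)[OF ed[OF x(2)]] x(1) by auto
      qed
      moreover have "y x = undefined" if "x \<notin> D" for x using that unfolding y Psi_def D_def by auto
      ultimately show ?thesis by (auto simp: PiE_def extensional_def)
    qed
    moreover have "2 \<le> card {x\<in>D. y x = v}" if v: "v < n" for v
    proof -
      have "2 \<le> degree E v" using E(1) v unfolding Good_def by auto
      also have "degree E v = card {e\<in>E. v \<in> e}" unfolding degree_def ..
      also have "{e\<in>E. v \<in> e} = \<sigma> ` {i\<in>{..<m}. v \<in> \<sigma> i}"
        using bij_betw_imp_surj_on[OF sg] by auto
      also have "card \<dots> = card {i\<in>{..<m}. v \<in> \<sigma> i}"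
        by (rule card_image, rule inj_on_subset[OF bij_betw_imp_inj_on[OF sg]]) auto
      also have "\<dots> \<le> card {x\<in>D. y x = v}"
      proof (rule card_inj_on_le[where f = "\<lambda>i. (i, if Min (\<sigma> i) = v then ob i else \<not> ob i)"])
        show "inj_on (\<lambda>i. (i, if Min (\<sigma> i) = v then ob i else \<not> ob i)) {i \<in> {..<m}. v \<in> \<sigma> i}"
          by (auto intro: inj_onI)
        show "(\<lambda>i. (i, if Min (\<sigma> i) = v then ob i else \<not> ob i)) ` {i \<in> {..<m}. v \<in> \<sigma> i} \<subseteq> {x \<in> D. y x = v}"
        proof
          fix z assume "z \<in> (\<lambda>i. (i, if Min (\<sigma> i) = v then ob i else \<not> ob i)) ` {i \<in> {..<m}. v \<in> \<sigma> i}"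
          then obtain i where i: "i < m" "v \<in> \<sigma> i" and z: "z = (i, if Min (\<sigma> i) = v then ob i else \<not> ob i)" by auto
          have "\<sigma> i = {Min (\<sigma> i), Max (\<sigma> i)}" using edge_facts(4)[OF ed[OF i(1)]] .
          hence "v = Min (\<sigma> i) \<or> v = Max (\<sigma> i)" using i(2) by blast
          thus "z \<in> {x \<in> D. y x = v}" using z i yv[OF i(1)] D_def by auto
        qed
        show "finite {x \<in> D. y x = v}" unfolding D_def by simp
      qed
      finally show ?thesis .
    qed
    ultimately show "y \<in> GS n D" unfolding GS_def by auto
  qed
  have "card X \<le> card (GS n D)"
    by (rule card_inj_on_le[OF inj img]) (simp add: GS_finite D_def)
  thus ?thesis using cX D_def by simp
qed


lemma binom_lower:
  assumes "m \<le> N"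
  shows "(real N - real m) ^ m \<le> real (N choose m) * fact m"
proof -
  have "real (N choose m) * fact m = (\<Prod>i = 0..<m. real N - real i)"
    by (simp add: binomial_gbinomial gbinomial_mult_fact')
  moreover have "(real N - real m) ^ m = (\<Prod>i = 0..<m. real N - real m)" by simp
  moreover have "(\<Prod>i = 0..<m. real N - real m) \<le> (\<Prod>i = 0..<m. real N - real i)"
    by (rule prod_mono) (use assms in auto)
  ultimately show ?thesis by simp
qed

lemma choose2_real: "2 * real (n choose 2) = real n * (real n - 1)"
proof -
  have "(real n gchoose 2) * fact 2 = (\<Prod>i = 0..<2. real n - real i)"
    by (rule gbinomial_mult_fact')
  hence "real (n choose 2) * 2 = (\<Prod>i = 0..<2. real n - real i)"
    by (simp add: binomial_gbinomial)
  thus ?thesis by (simp add: numeral_2_eq_2 mult.commute)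
qed

lemma fact_upper: "fact k \<le> (real k + 1) ^ (k + 1) * exp (- real k)"
proof (induction k)
  case 0 thus ?case by simp
next
  case (Suc k)
  define t where "t = 1 / (real k + 2)"
  have t: "0 < t" "t < 1" unfolding t_def by auto
  have "1 - t \<le> exp (- t)" using exp_ge_add_one_self[of "-t"] by simp
  hence "exp t \<le> 1 / (1 - t)" using t by (simp add: exp_minus field_simps)
  also have "1 / (1 - t) = (real k + 2) / (real k + 1)" unfolding t_def by (simp add: field_simps)
  finally have et: "exp t \<le> (real k + 2) / (real k + 1)" .
  have "real (k + 2) * t = 1" unfolding t_def by simp
  hence "exp 1 = exp t ^ (k + 2)" by (metis exp_of_nat_mult)
  also have "\<dots> \<le> ((real k + 2) / (real k + 1)) ^ (k + 2)" by (rule power_mono[OF et]) simp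
  also have "\<dots> = (real k + 2) ^ (k + 2) / (real k + 1) ^ (k + 2)" by (rule power_divide)
  finally have e0: "exp 1 \<le> (real k + 2) ^ (k + 2) / (real k + 1) ^ (k + 2)" .
  have pos: "0 < (real k + 1) ^ (k + 2)" by simp
  have e1: "exp 1 * (real k + 1) ^ (k + 2) \<le> (real k + 2) ^ (k + 2)"
    using e0 pos_le_divide_eq[OF pos] by blast
  have "fact (Suc k) = (real k + 1) * fact k" by simp
  also have "\<dots> \<le> (real k + 1) * ((real k + 1) ^ (k + 1) * exp (- real k))"
    by (rule mult_left_mono[OF Suc.IH]) simp
  also have "\<dots> = (exp 1 * (real k + 1) ^ (k + 2)) * exp (- real (Suc k))"
    by (simp add: exp_diff exp_minus field_simps)
  also have "\<dots> \<le> (real k + 2) ^ (k + 2) * exp (- real (Suc k))"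
    by (rule mult_right_mono[OF e1]) simp
  finally show ?case by (simp add: add.commute)
qed

lemma all_edges_card: "card (all_edges n) = n choose 2"
proof -
  have "all_edges n = {A. A \<subseteq> {..<n} \<and> card A = 2}"
    unfolding all_edges_def by (auto simp: card_2_iff)
  thus ?thesis using n_subsets[of "{..<n}" 2] by simp
qed

lemma space_card: "card (Gnm_space n m) = (n choose 2) choose m"
  unfolding Gnm_space_def using n_subsets[OF all_edges_finite, of n m] all_edges_card by simp

lemma prob_eq:
  assumes "1 \<le> n" "m \<le> n choose 2"
  shows "measure_pmf.prob (Gnm n m) {E. 2 \<le> min_degree n E} = card (Good n m) / card (Gnm_space n m)"
proof -
  have fin: "finite (Gnm_space n m)" unfolding Gnm_space_def
    by (rule finite_subset[of _ "Pow (all_edges n)"]) (auto simp: all_edges_finite)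
  have ne: "Gnm_space n m \<noteq> {}"
  proof
    assume "Gnm_space n m = {}"
    hence "card (Gnm_space n m) = 0" by simp
    thus False using space_card[of n m] assms(2) by simp
  qed
  have "Gnm_space n m \<inter> {E. 2 \<le> min_degree n E} = Good n m"
  proof -
    have "2 \<le> min_degree n E \<longleftrightarrow> (\<forall>v<n. 2 \<le> degree E v)" for E
      unfolding min_degree_def using assms(1) by (subst Min_ge_iff) (auto simp: lessThan_empty_iff)
    thus ?thesis unfolding Good_def by auto
  qed
  thus ?thesis unfolding Gnm_def using measure_pmf_of_set[OF ne fin] by simp
qed


lemma exp_one_minus: fixes x :: real assumes "0 \<le> x" "x \<le> 1/2" shows "1 \<le> exp (2*x) * (1 - x)"
proof -
  have e: "(1 + 2*x) * (1 - x) = 1 + x * (1 - 2*x)" by (simp add: algebra_simps)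
  have "0 \<le> x * (1 - 2*x)" using assms by simp
  hence "1 \<le> (1 + 2*x) * (1 - x)" using e by linarith
  also have "\<dots> \<le> exp (2*x) * (1 - x)" by (rule mult_right_mono) (use assms exp_ge_add_one_self[of "2*x"] in auto)
  finally show ?thesis .
qed

lemma key_bound:
  assumes n2: "2 \<le> n" and m1: "1 \<le> m" and x: "real n + 2 * real m \<le> real n ^ 2 / 2"
  defines "d \<equiv> 2 * real m / real n"
  shows "measure_pmf.prob (Gnm n m) {E. 2 \<le> min_degree n E}
         \<le> exp 1 * (2 * real m + 1) * exp (d + d^2 - real n * (1 + d) * exp (- d))"
proof -
  define M where "M = 2 * m"
  define D where "D = {..<m} \<times> (UNIV :: bool set)"
  have cD: "card D = M" unfolding D_def M_def by (simp add: card_cartesian_product)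
  define G where "G = real (card (Good n m))"
  define S where "S = real (card (Gnm_space n m))"
  define T where "T = real (card (GS n D))"
  define F where "F = exp d - 1 - d"
  define N where "N = n choose 2"
  define Q where "Q = real n * (real n - 1) - 2 * real m"
  have npos: "0 < real n" using n2 by simp
  have dpos: "0 < d" unfolding d_def using m1 n2 by simp
  have F0: "0 \<le> F" unfolding F_def using exp_ge_add_one_self[of d] by linarith
  have h1: "G * (fact m * 2 ^ m) \<le> T"
    unfolding G_def T_def D_def using Good_to_GS[of n m]
    by (metis (mono_tags, lifting) of_nat_fact of_nat_le_iff of_nat_mult of_nat_numeral of_nat_power)
  have h2: "T * d ^ M \<le> fact M * F ^ n"
    unfolding T_def F_def using GS_bound[of D d n] dpos cD D_def by simp
  have N2: "2 * real N = real n * (real n - 1)" unfolding N_def by (rule choose2_real)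
  have Qpos: "0 < Q"
  proof -
    have "real n * (real n - 1) - 2 * real m \<ge> real n ^ 2 / 2" using x by (simp add: power2_eq_square algebra_simps)
    moreover have "0 < real n ^ 2" using npos by simp
    ultimately show ?thesis unfolding Q_def by linarith
  qed
  have mN: "m \<le> N" using Qpos N2 unfolding Q_def by linarith
  have Q2: "Q = 2 * (real N - real m)" unfolding Q_def using N2 by simp
  have h3: "(real N - real m) ^ m \<le> S * fact m"
    unfolding S_def space_card N_def[symmetric] by (rule binom_lower[OF mN])
  have h3': "Q ^ m \<le> S * (fact m * 2 ^ m)"
  proof -
    have "Q ^ m = 2 ^ m * (real N - real m) ^ m" unfolding Q2 by (rule power_mult_distrib)
    also have "\<dots> \<le> 2 ^ m * (S * fact m)" by (rule mult_left_mono[OF h3]) simp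
    finally show ?thesis by (simp add: algebra_simps)
  qed
  have Spos: "0 < S" unfolding S_def space_card N_def[symmetric] using mN by simp
  have Prob: "measure_pmf.prob (Gnm n m) {E. 2 \<le> min_degree n E} = G / S"
    unfolding G_def S_def by (rule prob_eq) (use n2 mN N_def in auto)
  have G0: "0 \<le> G" unfolding G_def by simp
  have s1: "G / S \<le> T / Q ^ m"
  proof -
    have "G * Q ^ m \<le> G * (S * (fact m * 2 ^ m))" by (rule mult_left_mono[OF h3' G0])
    also have "\<dots> = (G * (fact m * 2 ^ m)) * S" by simp
    also have "\<dots> \<le> T * S" by (rule mult_right_mono[OF h1]) (use Spos in simp)
    finally have "G * Q ^ m \<le> T * S" .
    thus ?thesis using Spos Qpos by (simp add: field_simps)
  qed
  have s2: "T / Q ^ m \<le> fact M * F ^ n / (d ^ M * Q ^ m)"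
  proof -
    have "T = T * d ^ M / d ^ M" using dpos by simp
    also have "\<dots> \<le> fact M * F ^ n / d ^ M" by (rule divide_right_mono[OF h2]) (use dpos in simp)
    finally have "T / Q ^ m \<le> (fact M * F ^ n / d ^ M) / Q ^ m"
      by (rule divide_right_mono) (use Qpos in simp)
    thus ?thesis by (simp add: divide_divide_eq_left)
  qed
  define R where "R = exp 1 * (2 * real m + 1) * exp (d + d^2 - real n * (1 + d) * exp (- d))"
  have RM: "real M = real n * d" unfolding d_def M_def using npos by simp
  have f1: "fact M \<le> exp 1 * (real M + 1) * real M ^ M * exp (- real M)"
  proof -
    have "(real M + 1) ^ M \<le> exp 1 * real M ^ M"
    proof -
      have Mpos: "0 < real M" unfolding M_def using m1 by simp
      have "(real M + 1) = real M * (1 + 1 / real M)" using Mpos by (simp add: field_simps)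
      hence a: "(real M + 1) ^ M = real M ^ M * (1 + 1 / real M) ^ M" by (simp add: power_mult_distrib)
      have b: "(1 + 1 / real M) ^ M \<le> exp (1 / real M) ^ M"
        by (rule power_mono) (use exp_ge_add_one_self[of "1 / real M"] Mpos in auto)
      have c: "exp (1 / real M) ^ M = exp 1" using Mpos by (simp flip: exp_of_nat_mult)
      have "real M ^ M * (1 + 1 / real M) ^ M \<le> real M ^ M * exp 1"
        using b c by (intro mult_left_mono) auto
      thus ?thesis using a by (simp add: mult.commute)
    qed
    hence "(real M + 1) ^ (M + 1) \<le> (real M + 1) * (exp 1 * real M ^ M)" by (simp add: mult_left_mono)
    hence "(real M + 1) ^ (M + 1) * exp (- real M) \<le> (real M + 1) * (exp 1 * real M ^ M) * exp (- real M)"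
      by (rule mult_right_mono) simp
    with fact_upper[of M] show ?thesis by (simp add: algebra_simps)
  qed
  have f2: "F ^ n \<le> exp (real M) * exp (- (real n * (1 + d) * exp (- d)))"
  proof -
    have "exp (- d) * F = 1 - (1 + d) * exp (- d)" unfolding F_def by (simp add: algebra_simps exp_minus)
    also have "\<dots> \<le> exp (- ((1 + d) * exp (- d)))" using exp_ge_add_one_self[of "- ((1 + d) * exp (- d))"] by simp
    finally have a: "exp (- d) * F \<le> exp (- ((1 + d) * exp (- d)))" .
    have "(exp (- d) * F) ^ n \<le> exp (- ((1 + d) * exp (- d))) ^ n" by (rule power_mono[OF a]) (use F0 in simp)
    also have "\<dots> = exp (- (real n * (1 + d) * exp (- d)))" by (simp flip: exp_of_nat_mult)
    finally have b: "exp (- d) ^ n * F ^ n \<le> exp (- (real n * (1 + d) * exp (- d)))" by (simp add: power_mult_distrib)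
    have "exp (- d) ^ n = exp (- real M)" using RM by (simp flip: exp_of_nat_mult)
    hence "exp (- real M) * F ^ n \<le> exp (- (real n * (1 + d) * exp (- d)))" using b by simp
    hence "exp (real M) * (exp (- real M) * F ^ n) \<le> exp (real M) * exp (- (real n * (1 + d) * exp (- d)))"
      by (rule mult_left_mono) simp
    moreover have "exp (real M) * (exp (- real M) * F ^ n) = F ^ n"
      by (simp add: mult.assoc[symmetric] exp_add[symmetric])
    ultimately show ?thesis by simp
  qed
  have f3: "real M ^ M \<le> exp (d + d^2) * (real M ^ M * (Q / real n ^ 2) ^ m)"
  proof -
    define xx where "xx = (real n + 2 * real m) / real n ^ 2"
    have xx0: "0 \<le> xx" "xx \<le> 1/2" unfolding xx_def using x npos by (auto simp: field_simps)
    have "1 \<le> exp (2 * xx) * (1 - xx)" by (rule exp_one_minus[OF xx0])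
    hence "1 \<le> (exp (2 * xx) * (1 - xx)) ^ m" by (simp add: one_le_power)
    also have "\<dots> = exp (2 * xx) ^ m * (1 - xx) ^ m" by (simp add: power_mult_distrib)
    also have "exp (2 * xx) ^ m = exp (d + d^2)"
    proof -
      have "real m * (2 * xx) = d + d^2" unfolding xx_def d_def using npos by (simp add: field_simps power2_eq_square)
      thus ?thesis by (metis exp_of_nat_mult)
    qed
    also have "1 - xx = Q / real n ^ 2" unfolding xx_def Q_def using npos by (simp add: field_simps power2_eq_square)
    finally have "1 \<le> exp (d + d^2) * (Q / real n ^ 2) ^ m" .
    hence "real M ^ M * 1 \<le> real M ^ M * (exp (d + d^2) * (Q / real n ^ 2) ^ m)" by (rule mult_left_mono) simp
    thus ?thesis by (simp add: algebra_simps)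
  qed
  have dQ: "d ^ M * Q ^ m = real M ^ M * (Q / real n ^ 2) ^ m"
  proof -
    have "d = real M / real n" unfolding d_def M_def by simp
    hence "d ^ M = real M ^ M / real n ^ M" by (simp add: power_divide)
    moreover have "real n ^ M = (real n ^ 2) ^ m" unfolding M_def by (simp add: power_mult)
    ultimately show ?thesis using npos by (simp add: power_divide)
  qed
  have s3: "fact M * F ^ n \<le> R * (d ^ M * Q ^ m)"
  proof -
    have "fact M * F ^ n \<le> (exp 1 * (real M + 1) * real M ^ M * exp (- real M)) * (exp (real M) * exp (- (real n * (1 + d) * exp (- d))))"
      by (rule mult_mono[OF f1 f2]) (auto simp: F0)
    also have "\<dots> = exp 1 * (real M + 1) * exp (- (real n * (1 + d) * exp (- d))) * real M ^ M"
      by (simp add: exp_minus field_simps)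
    also have "\<dots> \<le> exp 1 * (real M + 1) * exp (- (real n * (1 + d) * exp (- d))) * (exp (d + d^2) * (real M ^ M * (Q / real n ^ 2) ^ m))"
      by (rule mult_left_mono[OF f3]) simp
    also have "\<dots> = (exp 1 * (real M + 1) * exp (d + d^2 - real n * (1 + d) * exp (- d))) * (real M ^ M * (Q / real n ^ 2) ^ m)"
    proof -
      have "exp (d + d^2 - real n * (1 + d) * exp (- d)) = exp (d + d^2) * exp (- (real n * (1 + d) * exp (- d)))"
        by (simp add: exp_add[symmetric])
      thus ?thesis by (simp only: mult_ac)
    qed
    also have "\<dots> = R * (d ^ M * Q ^ m)"
    proof -
      have "real M + 1 = 2 * real m + 1" unfolding M_def by simp
      thus ?thesis unfolding dQ R_def by simp
    qed
    finally show ?thesis .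
  qed
  have s4: "fact M * F ^ n / (d ^ M * Q ^ m) \<le> R"
    using s3 dpos Qpos by (simp add: divide_le_eq)
  show ?thesis using Prob s1 s2 s4 unfolding R_def by linarith
qed


lemma asym1: "((\<lambda>n::nat. ln (ln (real n)) / ln (real n)) \<longlongrightarrow> 0) at_top"
  by real_asymp
lemma asym2: "\<forall>\<^sub>F n::nat in at_top. real n + real n * ln (real n) / 2 \<le> real n ^ 2 / 2"
  by real_asymp
lemma asym3: "\<forall>\<^sub>F n::nat in at_top. exp 1 * (real n * ln (real n) / 2 + 1) * exp (ln (real n) / 2 + (ln (real n))^2/4 - real n * exp (- (ln (real n) / 2))) \<le> real n"
  by real_asymp

theorem lemma6p1:
  fixes m :: "nat \<Rightarrow> nat"
  assumes "(\<lambda>n. real (m n)) \<in> O(\<lambda>n. real n * ln (ln (real n)))"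
  shows "\<forall>\<^sub>F n in at_top.
           measure_pmf.prob (Gnm n (m n)) {E. 2 \<le> min_degree n E}
             \<le> real n * exp (- 2 * real (m n) * exp (- 2 * real (m n) / real n))"
proof -
  obtain c where c: "c > 0" and ev: "\<forall>\<^sub>F n in at_top. norm (real (m n)) \<le> c * norm (real n * ln (ln (real n)))"
    using landau_o.bigE[OF assms] by blast
  have E2: "\<forall>\<^sub>F n in at_top. ln (ln (real n)) / ln (real n) < 1 / (4 * c)"
    using order_tendstoD(2)[OF asym1] c by simp
  have E1: "\<forall>\<^sub>F n in at_top. (16::nat) \<le> n" by (rule eventually_ge_at_top)
  show ?thesis using ev E1 E2 asym2 asym3
  proof eventually_elim
    case (elim n)
    define L where "L = ln (real n)"
    define d where "d = 2 * real (m n) / real n"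
    have n16: "16 \<le> real n" using elim(2) by simp
    have npos: "0 < real n" using n16 by simp
    have "exp 1 < real n" using exp_le n16 by linarith
    hence "ln (exp 1) < ln (real n)" using npos by (subst ln_less_cancel_iff) auto
    hence L1: "1 < L" unfolding L_def by simp
    have LL: "0 < ln L" using L1 by simp
    have mle: "real (m n) \<le> c * (real n * ln L)" using elim(1) LL npos unfolding L_def by simp
    have cL: "4 * c * ln L < L" using elim(3) L1 c unfolding L_def[symmetric] by (simp add: field_simps)
    have d0: "0 \<le> d" unfolding d_def by simp
    have dL: "d \<le> L / 2"
    proof -
      have "2 * real (m n) \<le> 2 * (c * (real n * ln L))" using mle by simp
      hence "d \<le> 2 * (c * (real n * ln L)) / real n" unfolding d_def
        by (rule divide_right_mono) (use npos in simp)
      also have "\<dots> = 2 * c * ln L" using npos by simp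
      finally show ?thesis using cL by simp
    qed
    show ?case
    proof (cases "m n = 0")
      case True
      have "measure_pmf.prob (Gnm n (m n)) {E. 2 \<le> min_degree n E} \<le> 1" by simp
      also have "1 \<le> real n * exp (- 2 * real (m n) * exp (- 2 * real (m n) / real n))" using True n16 by simp
      finally show ?thesis .
    next
      case False
      have Mle: "2 * real (m n) \<le> real n * L / 2"
      proof -
        have "2 * real (m n) = real n * d" unfolding d_def using npos by simp
        also have "\<dots> \<le> real n * (L / 2)" by (rule mult_left_mono[OF dL]) simp
        finally show ?thesis by simp
      qed
      have x: "real n + 2 * real (m n) \<le> real n ^ 2 / 2" using elim(4) Mle unfolding L_def by simp
      have kb: "measure_pmf.prob (Gnm n (m n)) {E. 2 \<le> min_degree n E}
         \<le> exp 1 * (2 * real (m n) + 1) * exp (d + d^2 - real n * (1 + d) * exp (- d))"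
        unfolding d_def by (rule key_bound) (use False n16 x in auto)
      have split: "exp (d + d^2 - real n * (1 + d) * exp (- d)) = exp (d + d^2 - real n * exp (- d)) * exp (- 2 * real (m n) * exp (- 2 * real (m n) / real n))"
      proof -
        have eq: "- 2 * real (m n) * exp (- 2 * real (m n) / real n) = - (real n * d * exp (- d))"
          unfolding d_def using npos by simp
        have "exp (d + d^2 - real n * exp (- d)) * exp (- 2 * real (m n) * exp (- 2 * real (m n) / real n))
            = exp (d + d^2 - real n * exp (- d)) * exp (- (real n * d * exp (- d)))" by (simp only: eq)
        also have "\<dots> = exp ((d + d^2 - real n * exp (- d)) + - (real n * d * exp (- d)))" by (rule exp_add[symmetric])
        also have "\<dots> = exp (d + d^2 - real n * (1 + d) * exp (- d))"
          by (rule arg_cong[where f = exp]) (simp add: algebra_simps)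
        finally show ?thesis by simp
      qed
      have b1: "d + d^2 - real n * exp (- d) \<le> L / 2 + L^2 / 4 - real n * exp (- (L / 2))"
      proof -
        have "d^2 \<le> (L/2)^2" by (rule power_mono[OF dL d0])
        moreover have "real n * exp (- (L / 2)) \<le> real n * exp (- d)" using dL npos by simp
        ultimately show ?thesis using dL by (simp add: power_divide)
      qed
      have b2: "2 * real (m n) + 1 \<le> real n * L / 2 + 1" using Mle by simp
      have "exp 1 * (2 * real (m n) + 1) * exp (d + d^2 - real n * exp (- d))
          \<le> exp 1 * (real n * L / 2 + 1) * exp (L / 2 + L^2 / 4 - real n * exp (- (L / 2)))"
        by (intro mult_mono b2 order.refl) (use b1 L1 npos in auto)
      also have "\<dots> \<le> real n" using elim(5) unfolding L_def by simp
      finally have fin: "exp 1 * (2 * real (m n) + 1) * exp (d + d^2 - real n * exp (- d)) \<le> real n" .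
      have "measure_pmf.prob (Gnm n (m n)) {E. 2 \<le> min_degree n E}
         \<le> (exp 1 * (2 * real (m n) + 1) * exp (d + d^2 - real n * exp (- d))) * exp (- 2 * real (m n) * exp (- 2 * real (m n) / real n))"
        using kb unfolding split by (simp add: mult.assoc)
      also have "\<dots> \<le> real n * exp (- 2 * real (m n) * exp (- 2 * real (m n) / real n))"
        by (rule mult_right_mono[OF fin]) simp
      finally show ?thesis .
    qed
  qed
qed

end
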